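(* Let $K$ be a number field with $\sqrt{2}\in K$. Then there are infinitely many points $(x,y)\in K^2$ such that each of the squared distances $x^2+y^2$, $x^2+(1-y)^2$, $(1-x)^2+y^2$, $(1-x)^2+(1-y)^2$ to the vertices $(0,0),(0,1),(1,0),(1,1)$ of the unit square is the square of an element of $K$.
   Context: A distance is called $K$-rational if it lies in $K$. For a point with coordinates in $K$, the distance to a vertex of the unit square is $K$-rational exactly when the corresponding squared distance is the square of an element of $K$. *)

theory Defs
  imports Complex_Main
begin

definition complex_subfield :: "complex set \<Rightarrow> bool" where
  "complex_subfield K \<longleftrightarrow> 0 \<in> K \<and> 1 \<in> K \<and>
     (\<forall>a\<in>K. \<forall>b\<in>K. a + b \<in> K \<and> a - b \<in> K \<and> a * b \<in> K) \<and>
     (\<forall>a\<in>K. a \<noteq> 0 \<longrightarrow> inverse a \<in> K)"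

text \<open>A number field, realised (via an embedding) as a subfield of the complex numbers
  of finite dimension over the rationals: it is contained in the rational span of a finite set.\<close>
definition number_field :: "complex set \<Rightarrow> bool" where
  "number_field K \<longleftrightarrow> complex_subfield K \<and>
     (\<exists>B. finite B \<and> K \<subseteq> {\<Sum>b\<in>B. of_rat (c b) * b | c. True})"

end

theory Submission
  imports Defs
begin

lemma sf_int: assumes "complex_subfield K" shows "of_int z \<in> K"
proof -
  have n: "of_nat n \<in> K" for n
    using assms by (induction n) (auto simp: complex_subfield_def)
  show ?thesis
  proof (cases "z \<ge> 0")
    case True then show ?thesis using n[of "nat z"] by simp
  next
    case False
    have "0 - of_nat (nat (-z)) \<in> K" using n assms by (auto simp: complex_subfield_def)
    then show ?thesis using False by simp
  qed
qed

lemma sf_div: assumes "complex_subfield K" "a \<in> K" "b \<in> K" shows "a / b \<in> K"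
proof (cases "b = 0")
  case True then show ?thesis using assms by (simp add: complex_subfield_def)
next
  case False
  then have "inverse b \<in> K" using assms by (auto simp: complex_subfield_def)
  then show ?thesis using assms by (auto simp: complex_subfield_def divide_inverse)
qed

lemma den_nz: "int m ^ 2 + 2 * int m - 1 \<noteq> 0"
proof
  assume h: "int m ^ 2 + 2 * int m - 1 = 0"
  show False
  proof (cases m)
    case 0 then show ?thesis using h by simp
  next
    case (Suc k)
    then have "int m ^ 2 + 2 * int m \<ge> 2" by (simp add: power2_eq_square)
    then show ?thesis using h by simp
  qed
qed

lemma inj_aux:
  assumes "(int m ^ 2 - 1) * (int n ^ 2 + 2 * int n - 1) = (int n ^ 2 - 1) * (int m ^ 2 + 2 * int m - 1)"
  shows "m = n"
proof -
  have "2 * (int m - int n) * (int m * int n + 1) = 0"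
    using assms by (simp add: algebra_simps power2_eq_square)
  moreover have "int m * int n + 1 \<noteq> 0"
    by (metis add_less_same_cancel2 not_one_less_zero of_nat_mult of_nat_0_le_iff
        add_nonneg_eq_0_iff zero_le_one one_neq_zero)
  ultimately show ?thesis by simp
qed

theorem theorem2p2:
  fixes K :: "complex set"
  assumes "number_field K"
    and "\<exists>s\<in>K. s ^ 2 = 2"
  shows "infinite {(x, y). x \<in> K \<and> y \<in> K \<and>
            (\<exists>d\<in>K. x ^ 2 + y ^ 2 = d ^ 2) \<and>
            (\<exists>d\<in>K. x ^ 2 + (1 - y) ^ 2 = d ^ 2) \<and>
            (\<exists>d\<in>K. (1 - x) ^ 2 + y ^ 2 = d ^ 2) \<and>
            (\<exists>d\<in>K. (1 - x) ^ 2 + (1 - y) ^ 2 = d ^ 2)}"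
    (is "infinite ?S")
proof
  assume fin: "finite ?S"
  have F: "complex_subfield K" using assms(1) by (simp add: number_field_def)
  obtain s where s: "s \<in> K" "s ^ 2 = 2" using assms(2) by blast
  define D where "D m = (of_int (int m ^ 2 + 2 * int m - 1) :: complex)" for m
  define X where "X m = (of_int (int m ^ 2 - 1) :: complex) / D m" for m
  define E where "E m = (of_int (int m ^ 2 + 1) :: complex) / D m" for m
  have Dnz: "D m \<noteq> 0" for m unfolding D_def using den_nz[of m] of_int_eq_0_iff by blast
  have mulK: "a \<in> K \<Longrightarrow> b \<in> K \<Longrightarrow> a * b \<in> K" for a b using F by (simp add: complex_subfield_def)
  have subK: "a \<in> K \<Longrightarrow> b \<in> K \<Longrightarrow> a - b \<in> K" for a b using F by (simp add: complex_subfield_def)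
  have oneK: "1 \<in> K" using F by (simp add: complex_subfield_def)
  have XK: "X m \<in> K" for m unfolding X_def D_def by (rule sf_div[OF F sf_int[OF F] sf_int[OF F]])
  have EK: "E m \<in> K" for m unfolding E_def D_def by (rule sf_div[OF F sf_int[OF F] sf_int[OF F]])
  have key: "X m ^ 2 + (1 - X m) ^ 2 = E m ^ 2" for m
  proof -
    have "1 - X m = (of_int (2 * int m) :: complex) / D m"
      using Dnz[of m] unfolding X_def D_def by (simp add: field_simps)
    then have "X m ^ 2 + (1 - X m) ^ 2 = (of_int ((int m ^ 2 - 1)^2 + (2 * int m)^2)) / D m ^ 2"
      unfolding X_def by (simp add: power_divide add_divide_distrib)
    also have "(int m ^ 2 - 1)^2 + (2 * int m)^2 = (int m ^ 2 + 1)^2"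
      by (simp add: algebra_simps power2_eq_square)
    finally show ?thesis unfolding E_def by (simp add: power_divide)
  qed
  have mem: "(X m, X m) \<in> ?S" for m
  proof -
    have "X m ^ 2 + X m ^ 2 = (s * X m) ^ 2" using s by (simp add: power_mult_distrib)
    moreover have "(1 - X m) ^ 2 + (1 - X m) ^ 2 = (s * (1 - X m)) ^ 2"
      using s by (simp add: power_mult_distrib)
    moreover have "(1 - X m) ^ 2 + X m ^ 2 = E m ^ 2" using key[of m] by (simp add: add.commute)
    ultimately show ?thesis using XK[of m] EK[of m] key[of m] mulK[OF s(1) XK[of m]]
      mulK[OF s(1) subK[OF oneK XK[of m]]] by auto
  qed
  have inj: "inj (\<lambda>m. (X m, X m))"
  proof (rule injI)
    fix m n assume "(X m, X m) = (X n, X n)"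
    then have "X m = X n" by simp
    then have "(of_int (int m ^ 2 - 1) :: complex) * D n = of_int (int n ^ 2 - 1) * D m"
      using Dnz[of m] Dnz[of n] unfolding X_def by (simp add: field_simps)
    then have "(of_int ((int m ^ 2 - 1) * (int n ^ 2 + 2 * int n - 1)) :: complex)
        = of_int ((int n ^ 2 - 1) * (int m ^ 2 + 2 * int m - 1))"
      unfolding D_def by (simp only: of_int_mult)
    then show "m = n" by (rule inj_aux[OF of_int_eq_iff[THEN iffD1]])
  qed
  have "range (\<lambda>m. (X m, X m)) \<subseteq> ?S" using mem by blast
  then have "finite (range (\<lambda>m. (X m, X m)))" using fin finite_subset by blast
  then have "finite (UNIV :: nat set)" using inj finite_imageD by blast
  then show False by simp
qed

end
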